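(* With notation as below, suppose $\Phi_1<\Phi_2$, i.e. $\Phi_1(t)\le\Phi_2(t)$ for all $t\in(0,1)$ with strict inequality for at least one $t\in(0,1)$. Then: (a) if $\alpha<0$, then $\mu_1(\alpha)<\mu_2(\alpha)$; (b) if $0<\alpha<\tfrac12$, then $\mu_1(\alpha)>\mu_2(\alpha)$; (c) $\mu_1'>\mu_2'$.
   Context: For $j=1,2$, let $\xi_j$ be a random variable with values in $\{0,1,2,\dots\}$ with $\mathbb E\xi_j=1$ and $0<\operatorname{Var}\xi_j<\infty$, with probability generating function $\Phi_j(t)=\mathbb E t^{\xi_j}$, and let $\mathcal T^{(j)}$ be a Galton–Watson tree with offspring distribution $\xi_j$. For real $\alpha<1/2$, $\mu_j(\alpha):=\mathbb E|\mathcal T^{(j)}|^\alpha$ and $\mu_j':=\mathbb E\log|\mathcal T^{(j)}|$, where $|\cdot|$ is the number of vertices. *)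

theory Defs
  imports "HOL-Probability.Probability"
begin

text \<open>Finite rooted ordered (plane) trees.\<close>
datatype ptree = Node "ptree list"

fun tsize :: "ptree \<Rightarrow> nat" where
  "tsize (Node ts) = 1 + sum_list (map tsize ts)"

text \<open>Galton--Watson law on finite plane trees: P(T = t) is the product over all
  vertices v of t of P(xi = outdegree of v).\<close>
fun gw_prob :: "nat pmf \<Rightarrow> ptree \<Rightarrow> real" where
  "gw_prob p (Node ts) = pmf p (length ts) * prod_list (map (gw_prob p) ts)"

text \<open>P(|T| = n) (the set of plane trees with n vertices is finite).\<close>
definition gw_size_prob :: "nat pmf \<Rightarrow> nat \<Rightarrow> real" where
  "gw_size_prob p n = (\<Sum>t \<in> {t. tsize t = n}. gw_prob p t)"

definition pgf :: "nat pmf \<Rightarrow> real \<Rightarrow> real" where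
  "pgf p t = measure_pmf.expectation p (\<lambda>k. t ^ k)"

text \<open>mu(alpha) = E |T|^alpha and mu' = E log |T|.\<close>
definition gw_mu :: "nat pmf \<Rightarrow> real \<Rightarrow> real" where
  "gw_mu p \<alpha> = (\<Sum>n. gw_size_prob p n * real n powr \<alpha>)"

definition gw_mu' :: "nat pmf \<Rightarrow> real" where
  "gw_mu' p = (\<Sum>n. gw_size_prob p n * ln (real n))"

definition critical_finite_var :: "nat pmf \<Rightarrow> bool" where
  "critical_finite_var p \<longleftrightarrow>
     integrable (measure_pmf p) (\<lambda>k. (real k)^2) \<and>
     measure_pmf.expectation p real = 1 \<and>
     measure_pmf.variance p real > 0"

end

theory Submission
  imports Defs
begin

lemma tsize_pos: "tsize t \<ge> 1"
  by (cases t) simp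

lemma length_le_sum_sizes: "length ts \<le> sum_list (map tsize ts)"
proof (induction ts)
  case (Cons t ts) then show ?case using tsize_pos[of t] by simp
qed simp

lemma elem_le_sum_sizes: "t \<in> set ts \<Longrightarrow> tsize t \<le> sum_list (map tsize ts)"
  by (induction ts) auto

lemma finite_trees_le: "finite {t. tsize t \<le> n}"
proof (induction n)
  case 0
  have "{t. tsize t \<le> 0} = {}" using tsize_pos by (metis (mono_tags, lifting) Collect_empty_eq le_zero_eq not_one_le_zero)
  then show ?case by (metis finite.emptyI)
next
  case (Suc n)
  have "{t. tsize t \<le> Suc n} \<subseteq> Node ` {ts. set ts \<subseteq> {t. tsize t \<le> n} \<and> length ts \<le> n}"
  proof
    fix t assume "t \<in> {t. tsize t \<le> Suc n}"
    then obtain ts where t: "t = Node ts" and "sum_list (map tsize ts) \<le> n"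
      by (cases t) auto
    then show "t \<in> Node ` {ts. set ts \<subseteq> {t. tsize t \<le> n} \<and> length ts \<le> n}"
      using length_le_sum_sizes[of ts] elem_le_sum_sizes[of _ ts] by force
  qed
  moreover have "finite {ts. set ts \<subseteq> {t. tsize t \<le> n} \<and> length ts \<le> n}"
    using finite_lists_length_le[OF Suc.IH] by simp
  ultimately show ?case by (meson finite_imageI finite_subset)
qed

lemma finite_trees: "finite {t. tsize t = n}"
  by (rule finite_subset[OF _ finite_trees_le[of n]]) auto

definition forests :: "nat \<Rightarrow> nat \<Rightarrow> ptree list set" where
  "forests k m = {ts. length ts = k \<and> sum_list (map tsize ts) = m}"

lemma finite_forests: "finite (forests k m)"
proof -
  have "forests k m \<subseteq> {ts. set ts \<subseteq> {t. tsize t \<le> m} \<and> length ts \<le> k}"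
    unfolding forests_def using elem_le_sum_sizes by fastforce
  moreover have "finite {ts. set ts \<subseteq> {t. tsize t \<le> m} \<and> length ts \<le> k}"
    using finite_lists_length_le[OF finite_trees_le] by simp
  ultimately show ?thesis by (rule finite_subset)
qed

definition Q :: "nat pmf \<Rightarrow> nat \<Rightarrow> nat \<Rightarrow> real" where
  "Q p k m = (\<Sum>ts\<in>forests k m. prod_list (map (gw_prob p) ts))"

lemma gw_size_prob_0: "gw_size_prob p 0 = 0"
proof -
  have "{t. tsize t = 0} = {}" using tsize_pos by (metis (mono_tags, lifting) Collect_empty_eq not_one_le_zero)
  then show ?thesis unfolding gw_size_prob_def by (metis sum.empty)
qed

lemma Q_0: "Q p 0 m = (if m = 0 then 1 else 0)"
proof -
  have "forests 0 m = (if m = 0 then {[]} else {})" unfolding forests_def by auto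
  then show ?thesis unfolding Q_def by simp
qed

lemma Q_Suc: "Q p (Suc k) m = (\<Sum>j\<le>m. gw_size_prob p j * Q p k (m - j))"
proof -
  define B where "B = (\<Union>j\<in>{..m}. {t. tsize t = j} \<times> forests k (m - j))"
  have img: "forests (Suc k) m = (\<lambda>(t, ts). t # ts) ` B"
  proof (intro equalityI subsetI)
    fix x assume "x \<in> forests (Suc k) m"
    then obtain t ts where x: "x = t # ts" "length ts = k" "tsize t + sum_list (map tsize ts) = m"
      unfolding forests_def by (cases x) auto
    then have "(t, ts) \<in> B" unfolding B_def forests_def by force
    then show "x \<in> (\<lambda>(t, ts). t # ts) ` B" using x by force
  next
    fix x assume "x \<in> (\<lambda>(t, ts). t # ts) ` B"
    then show "x \<in> forests (Suc k) m" unfolding B_def forests_def by auto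
  qed
  have inj: "inj_on (\<lambda>(t, ts). t # ts) B" by (auto simp: inj_on_def)
  have "Q p (Suc k) m = (\<Sum>(t, ts)\<in>B. gw_prob p t * prod_list (map (gw_prob p) ts))"
    unfolding Q_def img by (subst sum.reindex[OF inj]) (simp add: case_prod_beta)
  also have "\<dots> = (\<Sum>j\<le>m. \<Sum>(t, ts)\<in>{t. tsize t = j} \<times> forests k (m - j). gw_prob p t * prod_list (map (gw_prob p) ts))"
    unfolding B_def
    by (rule sum.UNION_disjoint) (auto simp: finite_trees finite_forests)
  also have "\<dots> = (\<Sum>j\<le>m. gw_size_prob p j * Q p k (m - j))"
    unfolding gw_size_prob_def Q_def
    by (simp add: sum_product sum.cartesian_product)
  finally show ?thesis .
qed

lemma P_Suc: "gw_size_prob p (Suc m) = (\<Sum>k\<le>m. pmf p k * Q p k m)"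
proof -
  have img: "{t. tsize t = Suc m} = Node ` (\<Union>k\<in>{..m}. forests k m)"
  proof (intro equalityI subsetI)
    fix t assume "t \<in> {t. tsize t = Suc m}"
    then obtain ts where "t = Node ts" "sum_list (map tsize ts) = m" by (cases t) auto
    then show "t \<in> Node ` (\<Union>k\<in>{..m}. forests k m)"
      unfolding forests_def using length_le_sum_sizes[of ts] by force
  qed (auto simp: forests_def)
  have "gw_size_prob p (Suc m) = (\<Sum>ts\<in>(\<Union>k\<in>{..m}. forests k m). gw_prob p (Node ts))"
    unfolding gw_size_prob_def img by (subst sum.reindex) (auto simp: inj_on_def)
  also have "\<dots> = (\<Sum>k\<le>m. \<Sum>ts\<in>forests k m. gw_prob p (Node ts))"
    by (rule sum.UNION_disjoint) (auto simp: finite_forests, auto simp: forests_def)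
  also have "\<dots> = (\<Sum>k\<le>m. pmf p k * Q p k m)"
    unfolding Q_def by (intro sum.cong refl) (auto simp: forests_def sum_distrib_left)
  finally show ?thesis .
qed

lemma Q_zero_if: "m < k \<Longrightarrow> Q p k m = 0"
proof -
  assume "m < k"
  then have "forests k m = {}" unfolding forests_def using length_le_sum_sizes
    by (metis (mono_tags, lifting) empty_Collect_eq leD)
  then show ?thesis unfolding Q_def by (metis sum.empty)
qed

lemma gw_prob_nonneg: "gw_prob p t \<ge> 0"
proof (induction t)
  case (Node ts) then show ?case by (auto intro!: prod_list_nonneg mult_nonneg_nonneg)
qed

lemma P_nonneg: "gw_size_prob p n \<ge> 0"
  unfolding gw_size_prob_def by (auto intro!: sum_nonneg gw_prob_nonneg)

lemma Q_nonneg: "Q p k m \<ge> 0"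
  unfolding Q_def by (auto intro!: sum_nonneg prod_list_nonneg gw_prob_nonneg)

lemma pmf_expectation_sums:
  fixes f :: "nat \<Rightarrow> real"
  assumes "integrable (measure_pmf p) f"
  shows "(\<lambda>k. pmf p k * f k) sums (measure_pmf.expectation p f)"
proof -
  have i: "integrable (count_space UNIV) (\<lambda>k. pmf p k *\<^sub>R f k)"
    using assms unfolding measure_pmf_eq_density
    by (subst (asm) integrable_density) auto
  have "measure_pmf.expectation p f = integral\<^sup>L (count_space UNIV) (\<lambda>k. pmf p k *\<^sub>R f k)"
    unfolding measure_pmf_eq_density by (subst integral_density) auto
  then show ?thesis using sums_integral_count_space_nat[OF i] by simp
qed

lemma integrable_pmf_bounded:
  fixes f :: "nat \<Rightarrow> real"
  assumes "\<And>k. \<bar>f k\<bar> \<le> B"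
  shows "integrable (measure_pmf p) f"
  by (rule measure_pmf.integrable_const_bound[where B=B]) (auto simp: assms)

lemma pgf_sums:
  assumes "\<bar>y\<bar> \<le> 1"
  shows "(\<lambda>k. pmf p k * y ^ k) sums pgf p y"
  unfolding pgf_def
  by (rule pmf_expectation_sums, rule integrable_pmf_bounded[where B=1])
     (simp add: assms power_abs power_le_one)

lemma pmf_sums_1: "(\<lambda>k. pmf p k) sums 1"
  using pgf_sums[of 1 p] by (simp add: pgf_def)

lemma pgf_1: "pgf p 1 = 1"
  using pgf_sums[of 1 p] pmf_sums_1[of p] sums_unique2 by fastforce

lemma pgf_mono:
  assumes "0 \<le> a" "a \<le> b" "b \<le> 1"
  shows "pgf p a \<le> pgf p b"
  by (rule sums_le[OF _ pgf_sums pgf_sums]) (use assms in \<open>auto intro!: mult_left_mono power_mono\<close>)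

lemma pgf_nonneg:
  assumes "0 \<le> a" "a \<le> 1"
  shows "0 \<le> pgf p a"
  by (rule sums_le[OF _ sums_zero pgf_sums]) (use assms in auto)

lemma pgf_le_1:
  assumes "0 \<le> a" "a \<le> 1"
  shows "pgf p a \<le> 1"
  using pgf_mono[of a 1 p] pgf_1[of p] assms by simp

lemma power_convex_01:
  fixes a t :: real
  assumes "0 \<le> a" "0 \<le> t" "t \<le> 1"
  shows "((1 - t) * a + t) ^ k \<le> (1 - t) * a ^ k + t"
proof -
  have c: "convex_on {0::real..} (\<lambda>x. x ^ k)"
  proof (intro f''_ge0_imp_convex)
    show "((\<lambda>x. x ^ k) has_real_derivative of_nat k * x^(k-1)) (at x)" for x :: real
      by (rule derivative_eq_intros | simp)+
    show "((\<lambda>x. of_nat k * x^(k-1)) has_real_derivative of_nat k * of_nat (k-1) * x^(k-2)) (at x)" for x :: real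
      by (rule derivative_eq_intros | simp add: eval_nat_numeral)+
    show "\<And>x. x \<in> {0::real..} \<Longrightarrow> 0 \<le> real k * real (k - 1) * x ^ (k - 2)"
      by auto
  qed auto
  from convex_onD[OF c, of t a 1] assms show ?thesis by simp
qed

lemma pgf_convex:
  fixes a t :: real
  assumes "0 \<le> a" "a \<le> 1" "0 \<le> t" "t \<le> 1"
  shows "pgf p ((1 - t) * a + t) \<le> (1 - t) * pgf p a + t"
proof -
  have "0 \<le> (1 - t) * a + t" using assms by simp
  moreover have "(1 - t) * a + t \<le> 1" using assms
    by (metis add.commute diff_add_cancel diff_ge_0_iff_ge le_diff_eq mult_left_le)
  ultimately have s1: "(\<lambda>k. pmf p k * ((1 - t) * a + t) ^ k) sums pgf p ((1 - t) * a + t)"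
    by (intro pgf_sums) auto
  have s2: "(\<lambda>k. (1 - t) * (pmf p k * a ^ k) + t * pmf p k) sums ((1 - t) * pgf p a + t * 1)"
    by (intro sums_add sums_mult pgf_sums pmf_sums_1) (use assms in auto)
  have "pmf p k * ((1 - t) * a + t) ^ k \<le> (1 - t) * (pmf p k * a ^ k) + t * pmf p k" for k
  proof -
    have "pmf p k * ((1 - t) * a + t) ^ k \<le> pmf p k * ((1 - t) * a ^ k + t)"
      by (rule mult_left_mono[OF power_convex_01[OF assms(1,3,4)]]) simp
    then show ?thesis by (simp add: algebra_simps)
  qed
  then show ?thesis using sums_le[OF _ s1 s2] by simp
qed

lemma crit_mean_sums:
  assumes "critical_finite_var p"
  shows "(\<lambda>k. pmf p k * real k) sums 1"
proof -
  have i2: "integrable (measure_pmf p) (\<lambda>k. (real k)^2)" and e: "measure_pmf.expectation p real = 1"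
    using assms unfolding critical_finite_var_def by auto
  have "integrable (measure_pmf p) real"
    by (rule Bochner_Integration.integrable_bound[OF i2])
       (auto intro!: AE_I2 simp: power2_eq_square, metis le_square of_nat_le_iff of_nat_mult)
  from pmf_expectation_sums[OF this] e show ?thesis by simp
qed

definition cc :: "nat pmf \<Rightarrow> real" where "cc p = 1 - pmf p 0 - pmf p 1"

lemma cc_sums: "(\<lambda>k. pmf p k * (if 2 \<le> k then 1 else 0)) sums cc p"
proof -
  have "(\<lambda>k. pmf p k - (if k = 0 then pmf p k else 0) - (if k = 1 then pmf p k else 0)) sums (1 - pmf p 0 - pmf p 1)"
    by (intro sums_diff pmf_sums_1 sums_single)
  moreover have "(\<lambda>k. pmf p k - (if k = 0 then pmf p k else 0) - (if k = 1 then pmf p k else 0)) = (\<lambda>k. pmf p k * (if 2 \<le> k then 1 else 0))"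
    by (rule ext) auto
  ultimately show ?thesis unfolding cc_def by simp
qed

lemma cc_pos:
  assumes "critical_finite_var p"
  shows "cc p > 0"
proof (rule ccontr)
  assume "\<not> cc p > 0"
  moreover have "cc p \<ge> 0" by (rule sums_le[OF _ sums_zero cc_sums]) auto
  ultimately have c0: "cc p = 0" by simp
  have z: "pmf p k = 0" if "2 \<le> k" for k
  proof -
    have "\<forall>k. pmf p k * (if 2 \<le> k then 1 else 0) = 0"
      using cc_sums[of p] c0 suminf_eq_zero_iff[of "\<lambda>k. pmf p k * (if 2 \<le> k then 1 else 0)"]
      by (auto simp: sums_iff)
    then show ?thesis using that by (metis mult_cancel_left1 mult_not_zero)
  qed
  have "(\<lambda>k. pmf p k * real k) = (\<lambda>k. if k = 1 then pmf p 1 else 0)"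
    using z by (auto simp: fun_eq_iff)
  then have "(\<lambda>k. if k = 1 then pmf p 1 else 0) sums 1" using crit_mean_sums[OF assms] by simp
  then have p1: "pmf p 1 = 1" using sums_single[of 1 "\<lambda>_. pmf p 1"] sums_unique2 by blast
  have nz: "k \<in> set_pmf p \<Longrightarrow> k = 1" for k
    using z[of k] c0 p1 unfolding cc_def set_pmf_eq
    by (cases k; cases "k - 1") (auto)
  have e1: "measure_pmf.expectation p real = 1"
    using assms unfolding critical_finite_var_def by auto
  have "measure_pmf.variance p real = (\<Sum>a\<in>{1}. pmf p a *\<^sub>R (real a - 1)^2)"
    unfolding e1 by (rule integral_measure_pmf) (use nz in auto)
  then have "measure_pmf.variance p real = 0" by simp
  then show False using assms e1 unfolding critical_finite_var_def by simp
qed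

lemma bern_aux:
  fixes s :: real
  assumes "0 \<le> s" "s \<le> 1"
  shows "(1 - s) ^ k - 1 + real k * s \<ge> (if 2 \<le> k then s^2 else 0)"
proof (induction k rule: nat_less_induct)
  case (1 n)
  show ?case
  proof (cases "n \<le> 2")
    case True
    then have "n = 0 \<or> n = 1 \<or> n = 2" by auto
    then show ?thesis by (auto simp: power2_eq_square algebra_simps)
  next
    case False
    then obtain m where n: "n = Suc m" and m: "2 \<le> m" by (cases n) auto
    have ih: "(1 - s) ^ m - 1 + real m * s \<ge> s^2" using 1[rule_format, of m] n m by simp
    have "(1 - s) ^ m \<le> 1" using assms by (intro power_le_one) auto
    then have "(1 - s) ^ Suc m - 1 + real (Suc m) * s = ((1 - s) ^ m - 1 + real m * s) + s * (1 - (1 - s)^m)"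
      by (simp add: algebra_simps)
    also have "\<dots> \<ge> s^2" using ih \<open>(1 - s) ^ m \<le> 1\<close> assms
      by (smt (verit) mult_nonneg_nonneg)
    finally show ?thesis using n m by simp
  qed
qed

lemma pgf_lower:
  assumes "critical_finite_var p" "0 \<le> s" "s \<le> 1"
  shows "pgf p (1 - s) \<ge> 1 - s + cc p * s^2"
proof -
  have s1: "(\<lambda>k. pmf p k * (1 - s) ^ k - pmf p k + s * (pmf p k * real k)) sums (pgf p (1 - s) - 1 + s * 1)"
    by (intro sums_add sums_diff sums_mult pgf_sums pmf_sums_1 crit_mean_sums[OF assms(1)]) (use assms in auto)
  have s2: "(\<lambda>k. s^2 * (pmf p k * (if 2 \<le> k then 1 else 0))) sums (s^2 * cc p)"
    by (intro sums_mult cc_sums)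
  have "s^2 * (pmf p k * (if 2 \<le> k then 1 else 0)) \<le> pmf p k * (1 - s) ^ k - pmf p k + s * (pmf p k * real k)" for k
  proof -
    have "pmf p k * (if 2 \<le> k then s^2 else 0) \<le> pmf p k * ((1 - s) ^ k - 1 + real k * s)"
      by (rule mult_left_mono[OF bern_aux[OF assms(2,3)]]) simp
    then show ?thesis by (simp add: algebra_simps split: if_splits)
  qed
  from sums_le[OF _ s2 s1, OF this] show ?thesis by (simp add: algebra_simps)
qed

lemma pgf_ge:
  assumes "critical_finite_var p" "0 \<le> t" "t \<le> 1"
  shows "pgf p t \<ge> t"
  using pgf_lower[OF assms(1), of "1 - t"] assms cc_pos[OF assms(1)] by (smt (verit) mult_nonneg_nonneg zero_le_power2)

lemma ennreal_suminf_swap: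
  fixes f :: "nat \<Rightarrow> nat \<Rightarrow> ennreal"
  shows "(\<Sum>n. \<Sum>k. f k n) = (\<Sum>k. \<Sum>n. f k n)"
proof -
  have "(\<Sum>n. \<Sum>k. f k n) = (\<integral>\<^sup>+n. (\<Sum>k. f k n) \<partial>count_space UNIV)"
    by (simp add: nn_integral_count_space_nat)
  also have "\<dots> = (\<Sum>k. \<integral>\<^sup>+n. f k n \<partial>count_space UNIV)"
    by (rule nn_integral_suminf) simp
  also have "\<dots> = (\<Sum>k. \<Sum>n. f k n)"
    by (simp add: nn_integral_count_space_nat)
  finally show ?thesis .
qed

lemma sums_from_ennreal:
  fixes h :: "nat \<Rightarrow> real"
  assumes "\<And>m. 0 \<le> h m" "(\<Sum>m. ennreal (h m)) = ennreal A" "0 \<le> A"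
  shows "h sums A"
proof -
  have s: "summable h" using assms by (intro summable_suminf_not_top) auto
  have "ennreal (suminf h) = ennreal A" using suminf_ennreal2[OF _ s] assms by simp
  then have "suminf h = A" using assms by (simp add: suminf_nonneg[OF s])
  then show ?thesis using s by (simp add: sums_iff)
qed

lemma double_sums_swap:
  fixes g :: "nat \<Rightarrow> nat \<Rightarrow> real"
  assumes nn: "\<And>k m. 0 \<le> g k m" and s1: "\<And>k. (\<lambda>m. g k m) sums a k" and s2: "a sums A"
  shows "(\<lambda>m. \<Sum>k. g k m) sums A"
proof -
  have a_nn: "0 \<le> a k" for k by (rule sums_le[OF _ sums_zero s1]) (simp add: nn)
  have gm: "summable (\<lambda>k. g k m)" for m
  proof (rule summable_comparison_test'[OF sums_summable[OF s2], of 0])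
    show "norm (g k m) \<le> a k" for k
    proof -
      have "sum (\<lambda>m. g k m) {m} \<le> suminf (\<lambda>m. g k m)"
        by (rule sum_le_suminf[OF sums_summable[OF s1[of k]]]) (auto simp: nn)
      then show ?thesis using sums_unique[OF s1[of k]] nn[of k m] by simp
    qed
  qed
  have e1: "ennreal (\<Sum>k. g k m) = (\<Sum>k. ennreal (g k m))" for m
    by (rule suminf_ennreal2[symmetric, of "\<lambda>k. g k m", OF nn gm])
  have e2: "(\<Sum>m. ennreal (g k m)) = ennreal (a k)" for k
    using suminf_ennreal2[of "\<lambda>m. g k m", OF nn sums_summable[OF s1[of k]]] sums_unique[OF s1[of k]]
    by metis
  have e3: "(\<Sum>k. ennreal (a k)) = ennreal A"
    using suminf_ennreal2[of a, OF a_nn sums_summable[OF s2]] sums_unique[OF s2] by metis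
  have "(\<Sum>m. ennreal (\<Sum>k. g k m)) = (\<Sum>m. \<Sum>k. ennreal (g k m))"
    unfolding e1 ..
  also have "\<dots> = (\<Sum>k. \<Sum>m. ennreal (g k m))" by (rule ennreal_suminf_swap)
  also have "\<dots> = ennreal A" unfolding e2 e3 ..
  finally have E: "(\<Sum>m. ennreal (\<Sum>k. g k m)) = ennreal A" .
  have A0: "0 \<le> A" by (rule sums_le[OF _ sums_zero s2]) (simp add: a_nn)
  show ?thesis
    by (rule sums_from_ennreal[OF _ E A0]) (rule suminf_nonneg[OF gm], rule nn)
qed

lemma sum_Sigma_triangle:
  fixes f :: "nat \<Rightarrow> nat \<Rightarrow> real"
  shows "(\<Sum>m\<le>N. \<Sum>j\<le>m. f j (m - j)) = (\<Sum>j\<le>N. \<Sum>i\<le>N - j. f j i)"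
proof -
  have "(\<Sum>m\<le>N. \<Sum>j\<le>m. f j (m - j)) = (\<Sum>(j,i)\<in>{(j,i). j + i \<le> N}. f j i)"
    by (rule sum.triangle_reindex_eq[symmetric])
  also have "{(j,i). j + i \<le> N} = (SIGMA j:{..N}. {..N - j})" by auto
  also have "(\<Sum>(j,i)\<in>(SIGMA j:{..N}. {..N - j}). f j i) = (\<Sum>j\<le>N. \<Sum>i\<le>N - j. f j i)"
    by (rule sum.Sigma[symmetric]) auto
  finally show ?thesis .
qed

abbreviation PP where "PP p n \<equiv> gw_size_prob p n"

lemma Q_trunc: "(\<Sum>m\<le>N. Q p k m) \<le> (\<Sum>j\<le>N. PP p j) ^ k"
proof (induction k arbitrary: N)
  case 0
  then show ?case by (simp add: Q_0)
next
  case (Suc k)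
  have mono: "(\<Sum>j\<le>N - j'. PP p j) \<le> (\<Sum>j\<le>N. PP p j)" for j'
    by (rule sum_mono2) (auto simp: P_nonneg)
  have "(\<Sum>m\<le>N. Q p (Suc k) m) = (\<Sum>j\<le>N. \<Sum>i\<le>N - j. PP p j * Q p k i)"
    unfolding Q_Suc by (rule sum_Sigma_triangle)
  also have "\<dots> = (\<Sum>j\<le>N. PP p j * (\<Sum>i\<le>N - j. Q p k i))"
    by (simp add: sum_distrib_left)
  also have "\<dots> \<le> (\<Sum>j\<le>N. PP p j * (\<Sum>j\<le>N. PP p j) ^ k)"
  proof (rule sum_mono, rule mult_left_mono)
    fix j
    have "(\<Sum>i\<le>N - j. Q p k i) \<le> (\<Sum>i\<le>N - j. PP p i) ^ k" by (rule Suc.IH)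
    also have "\<dots> \<le> (\<Sum>j\<le>N. PP p j) ^ k"
      by (rule power_mono[OF mono]) (auto intro!: sum_nonneg P_nonneg)
    finally show "(\<Sum>i\<le>N - j. Q p k i) \<le> (\<Sum>j\<le>N. PP p j) ^ k" .
  qed (rule P_nonneg)
  also have "\<dots> = (\<Sum>j\<le>N. PP p j) ^ Suc k" by (simp add: sum_distrib_right[symmetric])
  finally show ?case .
qed

lemma P_partial_le_1: "(\<Sum>n\<le>N. PP p n) \<le> 1"
proof (induction N)
  case 0
  then show ?case by (simp add: gw_size_prob_0)
next
  case (Suc N)
  let ?S = "\<Sum>n\<le>N. PP p n"
  have S0: "0 \<le> ?S" by (auto intro!: sum_nonneg P_nonneg)
  have "(\<Sum>n\<le>Suc N. PP p n) = (\<Sum>m\<le>N. PP p (Suc m))"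
    by (subst sum.atMost_Suc_shift) (simp add: gw_size_prob_0)
  also have "\<dots> = (\<Sum>m\<le>N. \<Sum>k\<le>N. pmf p k * Q p k m)"
    unfolding P_Suc
    by (intro sum.cong refl sum.mono_neutral_left) (auto simp: Q_zero_if)
  also have "\<dots> = (\<Sum>k\<le>N. pmf p k * (\<Sum>m\<le>N. Q p k m))"
    by (subst sum.swap) (simp add: sum_distrib_left)
  also have "\<dots> \<le> (\<Sum>k\<le>N. pmf p k * ?S ^ k)"
    by (intro sum_mono mult_left_mono Q_trunc) auto
  also have "\<dots> \<le> pgf p ?S"
    using sum_le_suminf[OF sums_summable[OF pgf_sums[of ?S p]], of "{..N}"] S0 Suc.IH
    by (auto simp: sums_iff[THEN iffD1, OF pgf_sums[of ?S p]])
  also have "\<dots> \<le> 1" using pgf_le_1 S0 Suc.IH by blast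
  finally show ?case .
qed

lemma P_le_1: "PP p n \<le> 1"
proof -
  have "PP p n \<le> (\<Sum>n\<le>n. PP p n)" by (rule member_le_sum) (auto simp: P_nonneg)
  then show ?thesis using P_partial_le_1[of p n] by linarith
qed

lemma P_summable: "summable (PP p)"
  by (rule bounded_imp_summable[OF P_nonneg P_partial_le_1])

lemma P_suminf_le_1: "suminf (PP p) \<le> 1"
proof (rule suminf_le_const[OF P_summable])
  fix n
  have "(\<Sum>i<n. PP p i) \<le> (\<Sum>i\<le>n. PP p i)" by (rule sum_mono2) (auto simp: P_nonneg)
  then show "(\<Sum>i<n. PP p i) \<le> 1" using P_partial_le_1[of p n] by linarith
qed

definition FF :: "nat pmf \<Rightarrow> real \<Rightarrow> real" where
  "FF p z = (\<Sum>n. PP p n * z ^ n)"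

lemma F_summable:
  assumes "\<bar>z\<bar> \<le> 1"
  shows "summable (\<lambda>n. PP p n * z ^ n)"
proof (rule summable_comparison_test'[OF P_summable, of 0])
  fix n
  have "\<bar>z ^ n\<bar> \<le> 1" using assms by (simp add: power_abs power_le_one)
  then show "norm (PP p n * z ^ n) \<le> PP p n"
    using P_nonneg[of p n] by (simp add: abs_mult mult_left_le)
qed

lemma F_sums: "\<bar>z\<bar> \<le> 1 \<Longrightarrow> (\<lambda>n. PP p n * z ^ n) sums FF p z"
  unfolding FF_def using F_summable by (simp add: summable_sums)

lemma F_bounds:
  assumes "0 \<le> z" "z \<le> 1"
  shows "0 \<le> FF p z" "FF p z \<le> z"
proof -
  show "0 \<le> FF p z"
    by (rule sums_le[OF _ sums_zero F_sums]) (use assms in \<open>auto intro!: mult_nonneg_nonneg P_nonneg\<close>)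
  have le: "PP p n * z ^ n \<le> z * PP p n" for n
  proof (cases n)
    case 0 then show ?thesis by (simp add: gw_size_prob_0)
  next
    case (Suc m)
    have "z ^ n \<le> z" using assms Suc by (simp add: mult_left_le power_le_one)
    then show ?thesis using P_nonneg[of p n] by (metis mult.commute mult_left_mono)
  qed
  have "FF p z \<le> z * suminf (PP p)"
    by (rule sums_le[OF _ F_sums sums_mult[OF summable_sums[OF P_summable]]]) (use le assms in auto)
  also have "\<dots> \<le> z" using P_suminf_le_1[of p] assms by (simp add: mult_left_le)
  finally show "FF p z \<le> z" .
qed

lemma Q_pow_sums:
  assumes "0 \<le> z" "z \<le> 1"
  shows "(\<lambda>m. Q p k m * z ^ m) sums (FF p z) ^ k"
proof (induction k)
  case 0
  have "(\<lambda>m. Q p 0 m * z ^ m) = (\<lambda>m. if m = 0 then 1 else 0)" by (auto simp: Q_0 fun_eq_iff)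
  then show ?case using sums_single[of 0 "\<lambda>_. 1::real"] by simp
next
  case (Suc k)
  have a: "summable (\<lambda>n. norm (PP p n * z ^ n))"
    using F_summable[of z p] assms by (simp add: abs_mult P_nonneg)
  have b: "summable (\<lambda>n. norm (Q p k n * z ^ n))"
    using sums_summable[OF Suc.IH] assms by (simp add: abs_mult Q_nonneg)
  have "(\<lambda>m. \<Sum>j\<le>m. (PP p j * z ^ j) * (Q p k (m - j) * z ^ (m - j))) sums (FF p z * FF p z ^ k)"
    using Cauchy_product_sums[OF a b] sums_unique[OF Suc.IH] sums_unique[OF F_sums[of z p]] assms by simp
  moreover have "(\<Sum>j\<le>m. (PP p j * z ^ j) * (Q p k (m - j) * z ^ (m - j))) = Q p (Suc k) m * z ^ m" for m
  proof -
    have "(\<Sum>j\<le>m. (PP p j * z ^ j) * (Q p k (m - j) * z ^ (m - j))) = (\<Sum>j\<le>m. (PP p j * Q p k (m - j)) * z ^ m)"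
      by (intro sum.cong refl) (auto simp: power_add[symmetric])
    then show ?thesis by (simp add: Q_Suc sum_distrib_right)
  qed
  ultimately show ?case by simp
qed

lemma F_eq:
  assumes "0 \<le> z" "z \<le> 1"
  shows "FF p z = z * pgf p (FF p z)"
proof -
  let ?F = "FF p z"
  have F01: "0 \<le> ?F" "?F \<le> 1" using F_bounds[OF assms, of p] assms by auto
  define g where "g k m = pmf p k * (Q p k m * z ^ m)" for k m
  have s: "(\<lambda>m. \<Sum>k. g k m) sums pgf p ?F"
  proof (rule double_sums_swap)
    show "0 \<le> g k m" for k m unfolding g_def using assms by (auto intro!: mult_nonneg_nonneg Q_nonneg)
    show "(\<lambda>m. g k m) sums (pmf p k * ?F ^ k)" for k
      unfolding g_def by (rule sums_mult[OF Q_pow_sums[OF assms]])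
    show "(\<lambda>k. pmf p k * ?F ^ k) sums pgf p ?F" by (rule pgf_sums) (use F01 in auto)
  qed
  have "(\<Sum>k. g k m) = PP p (Suc m) * z ^ m" for m
  proof -
    have "(\<Sum>k. g k m) = (\<Sum>k\<le>m. g k m)"
      by (rule suminf_finite) (auto simp: g_def Q_zero_if)
    then show ?thesis unfolding g_def P_Suc by (simp add: sum_distrib_right mult.assoc)
  qed
  then have "(\<lambda>m. z * (PP p (Suc m) * z ^ m)) sums (z * pgf p ?F)"
    using sums_mult[OF s, of z] by simp
  then have "(\<lambda>m. PP p (Suc m) * z ^ Suc m) sums (z * pgf p ?F)"
    by (simp add: algebra_simps)
  then have "(\<lambda>n. PP p n * z ^ n) sums (z * pgf p ?F)"
    using sums_Suc_iff[of "\<lambda>n. PP p n * z^n" "z * pgf p ?F"] by (simp add: gw_size_prob_0)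
  then show ?thesis using F_sums[of z p] assms sums_unique2 by auto
qed

lemma no_cross:
  assumes z: "0 < z" "z < 1" and ab: "0 \<le> a" "a < b" "b < 1" and ga: "z * pgf p a \<le> a"
  shows "z * pgf p b < b"
proof -
  define t where "t = (b - a) / (1 - a)"
  have t: "0 < t" "t < 1" using ab unfolding t_def by (auto simp: field_simps)
  have "t * (1 - a) = b - a" unfolding t_def using ab by simp
  then have b_eq: "b = (1 - t) * a + t" by (simp add: algebra_simps)
  have "pgf p b \<le> (1 - t) * pgf p a + t"
    unfolding b_eq by (rule pgf_convex) (use ab t in auto)
  then have "z * pgf p b \<le> z * ((1 - t) * pgf p a + t)" using z by (simp add: mult_left_mono)
  also have "\<dots> = (1 - t) * (z * pgf p a) + t * z" by (simp add: algebra_simps)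
  also have "\<dots> \<le> (1 - t) * a + t * z" using ga t by (simp add: mult_left_mono)
  also have "\<dots> < (1 - t) * a + t" using t z by simp
  finally show ?thesis using b_eq by simp
qed

lemma F_lt1: "0 \<le> z \<Longrightarrow> z < 1 \<Longrightarrow> FF p z < 1"
  using F_bounds[of z p] by auto

lemma F_unique:
  assumes z: "0 < z" "z < 1" and y: "0 \<le> y" "y < 1" "y = z * pgf p y"
  shows "FF p z = y"
proof -
  let ?F = "FF p z"
  have F: "0 \<le> ?F" "?F < 1" "?F = z * pgf p ?F" using F_bounds[of z p] F_eq[of z p] z by auto
  show ?thesis
  proof (rule ccontr)
    assume "?F \<noteq> y"
    then consider "?F < y" | "y < ?F" by linarith
    then show False
    proof cases
      case 1 then show False using no_cross[OF z F(1) 1 y(2), of p] F y by linarith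
    next
      case 2 then show False using no_cross[OF z y(1) 2 F(2), of p] F y by linarith
    qed
  qed
qed

lemma F_compare:
  assumes z: "0 < z" "z < 1" and le: "\<forall>t\<in>{0<..<1}. pgf p1 t \<le> pgf p2 t"
  shows "FF p1 z \<le> FF p2 z"
proof (rule ccontr)
  let ?F1 = "FF p1 z" and ?F2 = "FF p2 z"
  assume "\<not> ?F1 \<le> ?F2"
  then have lt: "?F2 < ?F1" by simp
  have F1: "0 \<le> ?F1" "?F1 < 1" "?F1 = z * pgf p1 ?F1" using F_bounds[of z p1] F_eq[of z p1] z by auto
  have F2: "0 \<le> ?F2" "?F2 < 1" "?F2 = z * pgf p2 ?F2" using F_bounds[of z p2] F_eq[of z p2] z by auto
  have "z * pgf p2 ?F1 < ?F1" using no_cross[OF z F2(1) lt F1(2), of p2] F2 by linarith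
  moreover have "pgf p1 ?F1 \<le> pgf p2 ?F1" using le lt F1 F2 by auto
  ultimately show False using F1 z by (smt (verit) mult_left_mono)
qed

lemma F_sqrt_bound:
  assumes p: "critical_finite_var p" and z: "0 < z" "z < 1"
  shows "cc p * (1 - FF p z)^2 \<le> 1 - z"
proof -
  let ?F = "FF p z"
  have F: "0 \<le> ?F" "?F < 1" "?F = z * pgf p ?F" using F_bounds[of z p] F_eq[of z p] z by auto
  have low: "pgf p ?F \<ge> ?F + cc p * (1 - ?F)^2"
    using pgf_lower[OF p, of "1 - ?F"] F by simp
  have le1: "pgf p ?F \<le> 1" using pgf_le_1[of ?F p] F by simp
  have "(1 - z) * pgf p ?F = pgf p ?F - ?F" using F(3) by (simp add: algebra_simps)
  then have "cc p * (1 - ?F)^2 \<le> (1 - z) * pgf p ?F" using low by simp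
  also have "\<dots> \<le> 1 - z" using le1 z by (simp add: mult_left_le)
  finally show ?thesis .
qed

lemma P_sums_1:
  assumes p: "critical_finite_var p"
  shows "PP p sums 1"
proof -
  let ?S = "suminf (PP p)"
  have S1: "?S \<le> 1" by (rule P_suminf_le_1)
  have c: "cc p > 0" by (rule cc_pos[OF p])
  have c1: "cc p \<le> 1" using pmf_nonneg[of p 0] pmf_nonneg[of p 1] unfolding cc_def by linarith
  have S0: "0 \<le> ?S" by (rule suminf_nonneg[OF P_summable P_nonneg])
  have "?S \<ge> 1"
  proof (rule ccontr)
    assume "\<not> ?S \<ge> 1"
    define x where "x = 1/2 - ?S / 2"
    have x1: "0 < x" using \<open>\<not> ?S \<ge> 1\<close> unfolding x_def by linarith
    have x2': "x \<le> 1/2" using S0 unfolding x_def by linarith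
    note x = x1 x2'
    define z where "z = 1 - cc p * x^2"
    have x2: "0 < x^2" "x^2 \<le> 1/4" using x power_mono[of x "1/2" 2] by (auto simp: power2_eq_square)
    have cx: "0 < cc p * x^2" "cc p * x^2 \<le> 1/4"
      using c c1 x2 mult_mono[of "cc p" 1 "x^2" "1/4"] by auto
    have z1: "0 < z" unfolding z_def using cx by linarith
    have z2: "z < 1" unfolding z_def using cx by linarith
    note z = z1 z2
    have b: "cc p * (1 - FF p z)^2 \<le> cc p * x^2"
      using F_sqrt_bound[OF p z] unfolding z_def by simp
    then have b2: "(1 - FF p z)^2 \<le> x^2" using c by simp
    have "1 - FF p z \<le> x"
      by (rule power2_le_imp_le[OF b2]) (use x in simp)
    moreover have "FF p z \<le> ?S"
    proof (rule sums_le[OF _ F_sums summable_sums[OF P_summable]])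
      show "\<bar>z\<bar> \<le> 1" using z by simp
      show "PP p n * z ^ n \<le> PP p n" for n
        using P_nonneg[of p n] power_le_one[of z n] z by (simp add: mult_left_le)
    qed
    ultimately show False unfolding x_def using \<open>\<not> ?S \<ge> 1\<close> by linarith
  qed
  with S1 have S: "?S = 1" by simp
  have "PP p sums ?S" by (rule summable_sums[OF P_summable])
  then show ?thesis unfolding S .
qed

lemma F_isCont:
  assumes "\<bar>z\<bar> < 1"
  shows "isCont (FF p) z"
proof -
  have "isCont (\<lambda>x. \<Sum>n. PP p n * x ^ n) z"
    by (rule isCont_powser[where K=1]) (use P_summable assms in auto)
  then show ?thesis unfolding FF_def[abs_def] .
qed

lemma F_strict:
  assumes p1: "critical_finite_var p1" and p2: "critical_finite_var p2"
    and le: "\<forall>t\<in>{0<..<1}. pgf p1 t \<le> pgf p2 t"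
    and lt: "\<exists>t\<in>{0<..<1}. pgf p1 t < pgf p2 t"
  shows "\<exists>a b. 0 < a \<and> a < b \<and> b < 1 \<and> (\<forall>z\<in>{a<..<b}. FF p1 z < FF p2 z)"
proof -
  obtain t0 where t0: "0 < t0" "t0 < 1" "pgf p1 t0 < pgf p2 t0" using lt by auto
  have g: "pgf p2 t0 > t0" using pgf_ge[OF p1, of t0] t0 by simp
  define z0 where "z0 = t0 / pgf p2 t0"
  have z0: "0 < z0" "z0 < 1" using g t0 unfolding z0_def by (auto simp: field_simps)
  have eq: "t0 = z0 * pgf p2 t0" using g t0 unfolding z0_def by simp
  have F2: "FF p2 z0 = t0" by (rule F_unique[OF z0]) (use t0 eq in auto)
  have F1: "FF p1 z0 < t0"
  proof -
    have "FF p1 z0 \<le> t0" using F_compare[OF z0 le] F2 by simp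
    moreover have "FF p1 z0 \<noteq> t0"
    proof
      assume h: "FF p1 z0 = t0"
      have "t0 = z0 * pgf p1 t0" using F_eq[of z0 p1] z0 h by simp
      also have "\<dots> < z0 * pgf p2 t0" using z0 t0 by simp
      finally show False using eq by simp
    qed
    ultimately show ?thesis by simp
  qed
  have c: "isCont (\<lambda>z. FF p2 z - FF p1 z) z0"
    using F_isCont[of z0 p1] F_isCont[of z0 p2] z0 by (intro continuous_intros) auto
  have "0 < FF p2 z0 - FF p1 z0" using F1 F2 by simp
  from c[unfolded isCont_def, THEN order_tendstoD(1), OF this]
  have "\<forall>\<^sub>F z in at z0. 0 < FF p2 z - FF p1 z" .
  then obtain d where d: "d > 0" "\<And>z. z \<noteq> z0 \<Longrightarrow> dist z z0 < d \<Longrightarrow> 0 < FF p2 z - FF p1 z"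
    unfolding eventually_at by auto
  define b where "b = min (z0 + d) 1"
  have "z0 < b" "b \<le> 1" using d z0 unfolding b_def by auto
  define a where "a = z0"
  define b' where "b' = (a + b) / 2"
  show ?thesis
  proof (intro exI conjI ballI)
    show "0 < a" "a < b'" "b' < 1" using z0 \<open>z0 < b\<close> \<open>b \<le> 1\<close> unfolding a_def b'_def by auto
    fix z assume "z \<in> {a<..<b'}"
    then have "z \<noteq> z0" "dist z z0 < d" using \<open>z0 < b\<close> unfolding a_def b'_def b_def dist_real_def by auto
    then show "FF p1 z < FF p2 z" using d by force
  qed
qed

lemma kernel:
  assumes s: "s > 0" and t: "t > 0"
  shows "(\<integral>\<^sup>+x. ennreal (indicator {0..} x * x powr (s - 1) / exp (t * x)) \<partial>lborel)
         = ennreal (Gamma s / t powr s)"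
proof -
  let ?f = "\<lambda>u::real. ennreal (indicator {0..} u * u powr (s - 1) / exp u)"
  have "ennreal (Gamma s) = (\<integral>\<^sup>+u. ?f u \<partial>lborel)"
    using Gamma_conv_nn_integral_real[OF s] by simp
  also have "\<dots> = ennreal \<bar>t\<bar> * (\<integral>\<^sup>+x. ?f (0 + t * x) \<partial>lborel)"
    by (rule nn_integral_real_affine) (use t in auto)
  also have "(\<lambda>x. ?f (0 + t * x)) = (\<lambda>x. ennreal (t powr (s - 1)) * ennreal (indicator {0..} x * x powr (s - 1) / exp (t * x)))"
  proof (rule ext)
    fix x :: real
    show "?f (0 + t * x) = ennreal (t powr (s - 1)) * ennreal (indicator {0..} x * x powr (s - 1) / exp (t * x))"
    proof (cases "x \<ge> 0")
      case True
      then have "(t * x) powr (s - 1) = t powr (s - 1) * x powr (s - 1)"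
        using t by (simp add: powr_mult)
      then show ?thesis using True t by (simp add: ennreal_mult'[symmetric] indicator_def)
    next
      case False
      then have "\<not> 0 \<le> t * x" using t by (simp add: zero_le_mult_iff)
      then show ?thesis using False by (simp add: indicator_def)
    qed
  qed
  also have "ennreal \<bar>t\<bar> * (\<integral>\<^sup>+x. ennreal (t powr (s - 1)) * ennreal (indicator {0..} x * x powr (s - 1) / exp (t * x)) \<partial>lborel)
     = ennreal (t powr s) * (\<integral>\<^sup>+x. ennreal (indicator {0..} x * x powr (s - 1) / exp (t * x)) \<partial>lborel)"
  proof -
    have "t * t powr (s - 1) = t powr s" using t by (simp add: powr_diff)
    then show ?thesis using t
      by (subst nn_integral_cmult) (auto simp: ennreal_mult'[symmetric] mult.assoc[symmetric])
  qed
  finally have eq: "ennreal (Gamma s) = ennreal (t powr s) * (\<integral>\<^sup>+x. ennreal (indicator {0..} x * x powr (s - 1) / exp (t * x)) \<partial>lborel)" .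
  have tp: "t powr s > 0" using t by simp
  have "ennreal (Gamma s / t powr s) = ennreal (Gamma s) / ennreal (t powr s)"
    using tp Gamma_real_pos[OF s] by (simp add: divide_ennreal)
  also have "\<dots> = (\<integral>\<^sup>+x. ennreal (indicator {0..} x * x powr (s - 1) / exp (t * x)) \<partial>lborel)"
    unfolding eq using tp by (subst mult.commute) (rule ennreal_mult_divide_eq, auto)
  finally show ?thesis ..
qed

lemma inner_exp_integral:
  assumes x: "x > 0" and ab: "a \<le> b"
  shows "(\<integral>\<^sup>+t. ennreal (indicator {a<..b} t / exp (t * x)) \<partial>lborel) = ennreal ((exp (-(a*x)) - exp (-(b*x))) / x)"
proof -
  have "((\<lambda>t. 1 / exp (t * x)) has_integral ((- exp (-(b*x)) / x) - (- exp (-(a*x)) / x))) {a..b}"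
  proof (rule fundamental_theorem_of_calculus[OF ab])
    fix t assume "t \<in> {a..b}"
    have "((\<lambda>t. - exp (-(t*x)) / x) has_real_derivative (exp (-(t*x)) * x / x)) (at t within {a..b})"
      using x by (auto intro!: derivative_eq_intros simp: field_simps)
    then show "((\<lambda>t. - exp (-(t*x)) / x) has_vector_derivative 1 / exp (t * x)) (at t within {a..b})"
      using x by (simp add: has_real_derivative_iff_has_vector_derivative exp_minus field_simps)
  qed
  then have "(\<integral>\<^sup>+t. ennreal (1 / exp (t * x)) * indicator {a..b} t \<partial>lborel) = ennreal ((exp (-(a*x)) - exp (-(b*x))) / x)"
    by (subst nn_integral_has_integral_lebesgue') (auto simp: diff_divide_distrib)
  moreover have "(\<integral>\<^sup>+t. ennreal (indicator {a<..b} t / exp (t * x)) \<partial>lborel) = (\<integral>\<^sup>+t. ennreal (1 / exp (t * x)) * indicator {a..b} t \<partial>lborel)"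
    by (rule nn_integral_cong_AE, use AE_lborel_singleton[of a] in eventually_elim) (auto simp: indicator_def)
  ultimately show ?thesis by simp
qed

lemma tonelli_L:
  assumes s: "s > 0" and ab: "0 \<le> a" "a \<le> b"
  shows "(\<integral>\<^sup>+x. ennreal (indicator {0<..} x * x powr (s - 1) * ((exp (-(a*x)) - exp (-(b*x))) / x)) \<partial>lborel)
       = (\<integral>\<^sup>+t. ennreal (indicator {a<..b} t * (Gamma s / t powr s)) \<partial>lborel)"
proof -
  define g where "g = (\<lambda>(x::real, t::real). ennreal (indicator {a<..b} t * (indicator {0..} x * x powr (s - 1) / exp (t * x))))"
  have gm: "g \<in> borel_measurable (lborel \<Otimes>\<^sub>M lborel)"
    unfolding g_def by measurable
  have "(\<integral>\<^sup>+t. ennreal (indicator {a<..b} t * (Gamma s / t powr s)) \<partial>lborel)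
      = (\<integral>\<^sup>+t. (\<integral>\<^sup>+x. g (x, t) \<partial>lborel) \<partial>lborel)"
  proof (rule nn_integral_cong)
    fix t :: real
    show "ennreal (indicator {a<..b} t * (Gamma s / t powr s)) = (\<integral>\<^sup>+x. g (x, t) \<partial>lborel)"
    proof (cases "t \<in> {a<..b}")
      case True
      then have t: "t > 0" using ab by auto
      show ?thesis using True kernel[OF s t] by (simp add: g_def)
    next
      case False
      then show ?thesis by (simp add: g_def)
    qed
  qed
  also have "\<dots> = (\<integral>\<^sup>+x. (\<integral>\<^sup>+t. g (x, t) \<partial>lborel) \<partial>lborel)"
    by (rule lborel_pair.Fubini[OF gm])
  also have "\<dots> = (\<integral>\<^sup>+x. ennreal (indicator {0<..} x * x powr (s - 1) * ((exp (-(a*x)) - exp (-(b*x))) / x)) \<partial>lborel)"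
  proof (rule nn_integral_cong)
    fix x :: real
    show "(\<integral>\<^sup>+t. g (x, t) \<partial>lborel) = ennreal (indicator {0<..} x * x powr (s - 1) * ((exp (-(a*x)) - exp (-(b*x))) / x))"
    proof (cases "x > 0")
      case True
      have "(\<integral>\<^sup>+t. g (x, t) \<partial>lborel) = (\<integral>\<^sup>+t. ennreal (x powr (s - 1)) * ennreal (indicator {a<..b} t / exp (t * x)) \<partial>lborel)"
        using True by (intro nn_integral_cong) (auto simp: g_def indicator_def ennreal_mult'[symmetric])
      also have "\<dots> = ennreal (x powr (s - 1)) * ennreal ((exp (-(a*x)) - exp (-(b*x))) / x)"
        by (subst nn_integral_cmult) (auto simp: inner_exp_integral[OF True ab(2)])
      also have "\<dots> = ennreal (indicator {0<..} x * x powr (s - 1) * ((exp (-(a*x)) - exp (-(b*x))) / x))"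
        using True by (simp add: ennreal_mult'[symmetric])
      finally show ?thesis .
    next
      case False
      then have "g (x, t) = 0" for t by (cases "x = 0") (auto simp: g_def indicator_def)
      then show ?thesis using False by simp
    qed
  qed
  finally show ?thesis ..
qed

lemma rep_lemma:
  fixes K :: "real \<Rightarrow> nat \<Rightarrow> real" and \<phi> :: "nat \<Rightarrow> real"
  assumes Km: "\<And>n. (\<lambda>x. K x n) \<in> borel_measurable borel"
    and Knn: "\<And>x n. n \<ge> 1 \<Longrightarrow> 0 \<le> K x n"
    and Kint: "\<And>n. n \<ge> 1 \<Longrightarrow> (\<integral>\<^sup>+x. ennreal (K x n) \<partial>lborel) = ennreal (C * \<phi> n)"
    and C: "C > 0" and \<phi>nn: "\<And>n. 0 \<le> \<phi> n"
    and sG: "\<And>x. (\<lambda>n. PP p n * K x n) sums G x"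
  shows "ennreal C * (\<Sum>n. ennreal (PP p n * \<phi> n)) = (\<integral>\<^sup>+x. ennreal (G x) \<partial>lborel)"
proof -
  have tnn: "0 \<le> PP p n * K x n" for x n
    by (cases "n = 0") (auto simp: gw_size_prob_0 P_nonneg Knn)
  have trm: "ennreal C * ennreal (PP p n * \<phi> n) = (\<integral>\<^sup>+x. ennreal (PP p n * K x n) \<partial>lborel)" for n
  proof (cases "n = 0")
    case True then show ?thesis by (simp add: gw_size_prob_0)
  next
    case False
    then have n: "n \<ge> 1" by simp
    have "ennreal C * ennreal (PP p n * \<phi> n) = ennreal (PP p n) * ennreal (C * \<phi> n)"
      using C \<phi>nn[of n] P_nonneg[of p n] by (simp add: ennreal_mult'[symmetric] mult_ac)
    also have "\<dots> = ennreal (PP p n) * (\<integral>\<^sup>+x. ennreal (K x n) \<partial>lborel)" using Kint[OF n] by simp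
    also have "\<dots> = (\<integral>\<^sup>+x. ennreal (PP p n) * ennreal (K x n) \<partial>lborel)"
      by (rule nn_integral_cmult[symmetric]) (use Km in simp)
    also have "\<dots> = (\<integral>\<^sup>+x. ennreal (PP p n * K x n) \<partial>lborel)"
      using P_nonneg[of p n] by (simp add: ennreal_mult'[symmetric])
    finally show ?thesis .
  qed
  have "ennreal C * (\<Sum>n. ennreal (PP p n * \<phi> n)) = (\<Sum>n. ennreal C * ennreal (PP p n * \<phi> n))"
    by simp
  also have "\<dots> = (\<Sum>n. \<integral>\<^sup>+x. ennreal (PP p n * K x n) \<partial>lborel)" unfolding trm ..
  also have "\<dots> = (\<integral>\<^sup>+x. (\<Sum>n. ennreal (PP p n * K x n)) \<partial>lborel)"
    by (rule nn_integral_suminf[symmetric]) (use Km in simp)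
  also have "\<dots> = (\<integral>\<^sup>+x. ennreal (G x) \<partial>lborel)"
  proof (rule nn_integral_cong)
    fix x
    show "(\<Sum>n. ennreal (PP p n * K x n)) = ennreal (G x)"
      using suminf_ennreal2[OF tnn sums_summable[OF sG[of x]]] sums_unique[OF sG[of x]] by simp
  qed
  finally show ?thesis .
qed

lemma compare_general:
  fixes K :: "real \<Rightarrow> nat \<Rightarrow> real" and \<phi> :: "nat \<Rightarrow> real"
  assumes Km: "\<And>n. (\<lambda>x. K x n) \<in> borel_measurable borel"
    and Knn: "\<And>x n. n \<ge> 1 \<Longrightarrow> 0 \<le> K x n"
    and Kint: "\<And>n. n \<ge> 1 \<Longrightarrow> (\<integral>\<^sup>+x. ennreal (K x n) \<partial>lborel) = ennreal (C * \<phi> n)"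
    and C: "C > 0" and \<phi>nn: "\<And>n. 0 \<le> \<phi> n"
    and sa: "\<And>x. (\<lambda>n. PP pa n * K x n) sums Ga x"
    and sb: "\<And>x. (\<lambda>n. PP pb n * K x n) sums Gb x"
    and le: "\<And>x. Ga x \<le> Gb x"
    and strict: "l < u" "\<And>x. x \<in> {l<..<u} \<Longrightarrow> Ga x < Gb x"
    and fin: "(\<integral>\<^sup>+x. ennreal (Gb x) \<partial>lborel) \<noteq> \<infinity>"
  shows "(\<Sum>n. PP pa n * \<phi> n) < (\<Sum>n. PP pb n * \<phi> n)"
proof -
  have tnn: "0 \<le> PP p n * K x n" for x n p
    by (cases "n = 0") (auto simp: gw_size_prob_0 P_nonneg Knn)
  have Ga_nn: "0 \<le> Ga x" for x by (rule sums_le[OF _ sums_zero sa]) (rule tnn)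
  have Gam: "Ga \<in> borel_measurable borel"
  proof -
    have "Ga = (\<lambda>x. \<Sum>n. PP pa n * K x n)" using sa sums_unique by (auto simp: fun_eq_iff)
    moreover have "(\<lambda>x. \<Sum>n. PP pa n * K x n) \<in> borel_measurable borel" using Km by measurable
    ultimately show ?thesis by simp
  qed
  have Gbm: "Gb \<in> borel_measurable borel"
  proof -
    have "Gb = (\<lambda>x. \<Sum>n. PP pb n * K x n)" using sb sums_unique by (auto simp: fun_eq_iff)
    moreover have "(\<lambda>x. \<Sum>n. PP pb n * K x n) \<in> borel_measurable borel" using Km by measurable
    ultimately show ?thesis by simp
  qed
  have ra: "ennreal C * (\<Sum>n. ennreal (PP pa n * \<phi> n)) = (\<integral>\<^sup>+x. ennreal (Ga x) \<partial>lborel)"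
    by (rule rep_lemma[OF Km Knn Kint C \<phi>nn sa])
  have rb: "ennreal C * (\<Sum>n. ennreal (PP pb n * \<phi> n)) = (\<integral>\<^sup>+x. ennreal (Gb x) \<partial>lborel)"
    by (rule rep_lemma[OF Km Knn Kint C \<phi>nn sb])
  have lessI: "(\<integral>\<^sup>+x. ennreal (Ga x) \<partial>lborel) < (\<integral>\<^sup>+x. ennreal (Gb x) \<partial>lborel)"
  proof (rule nn_integral_less)
    show "(\<lambda>x. ennreal (Ga x)) \<in> borel_measurable lborel" using Gam by measurable
    show "(\<lambda>x. ennreal (Gb x)) \<in> borel_measurable lborel" using Gbm by measurable
    have "(\<integral>\<^sup>+x. ennreal (Ga x) \<partial>lborel) \<le> (\<integral>\<^sup>+x. ennreal (Gb x) \<partial>lborel)"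
      by (intro nn_integral_mono ennreal_leI le)
    then show "(\<integral>\<^sup>+x. ennreal (Ga x) \<partial>lborel) \<noteq> \<infinity>" using fin by (auto simp: top_unique)
    show "AE x in lborel. ennreal (Ga x) \<le> ennreal (Gb x)" by (intro AE_I2 ennreal_leI le)
    show "\<not> (AE x in lborel. ennreal (Gb x) \<le> ennreal (Ga x))"
    proof
      assume "AE x in lborel. ennreal (Gb x) \<le> ennreal (Ga x)"
      then have "AE x in lborel. x \<notin> {l<..<u}"
      proof (rule AE_mp, intro AE_I2 impI)
        fix x assume h: "ennreal (Gb x) \<le> ennreal (Ga x)"
        show "x \<notin> {l<..<u}"
        proof
          assume "x \<in> {l<..<u}"
          then have "Ga x < Gb x" by (rule strict(2))
          then have "ennreal (Ga x) < ennreal (Gb x)" using Ga_nn[of x] by (simp add: ennreal_less_iff)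
          then show False using h by simp
        qed
      qed
      then obtain N where N: "{x \<in> space lborel. \<not> x \<notin> {l<..<u}} \<subseteq> N" "emeasure lborel N = 0" "N \<in> sets lborel"
        by (rule AE_E)
      have "emeasure lborel {l<..<u} \<le> emeasure lborel N" using N by (intro emeasure_mono) auto
      then show False using N strict(1) by simp
    qed
  qed
  define Sa where "Sa = (\<Sum>n. ennreal (PP pa n * \<phi> n))"
  define Sb where "Sb = (\<Sum>n. ennreal (PP pb n * \<phi> n))"
  have CS: "ennreal C * Sa < ennreal C * Sb" using ra rb lessI unfolding Sa_def Sb_def by simp
  have Sb_fin: "Sb \<noteq> \<infinity>" using rb fin C unfolding Sb_def by (auto simp: ennreal_mult_eq_top_iff)
  have SaSb: "Sa < Sb"
  proof (rule ccontr)
    assume "\<not> Sa < Sb"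
    then have "Sb \<le> Sa" by simp
    then have "ennreal C * Sb \<le> ennreal C * Sa" by (rule mult_left_mono) simp
    then show False using CS by simp
  qed
  have Sa_fin: "Sa \<noteq> \<infinity>" using SaSb Sb_fin by (auto simp: top_unique)
  have nnA: "0 \<le> PP pa n * \<phi> n" for n using P_nonneg \<phi>nn by (simp add: mult_nonneg_nonneg)
  have nnB: "0 \<le> PP pb n * \<phi> n" for n using P_nonneg \<phi>nn by (simp add: mult_nonneg_nonneg)
  have smA: "summable (\<lambda>n. PP pa n * \<phi> n)" using Sa_fin nnA unfolding Sa_def by (intro summable_suminf_not_top) auto
  have smB: "summable (\<lambda>n. PP pb n * \<phi> n)" using Sb_fin nnB unfolding Sb_def by (intro summable_suminf_not_top) auto
  have "ennreal (\<Sum>n. PP pa n * \<phi> n) < ennreal (\<Sum>n. PP pb n * \<phi> n)"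
    using SaSb suminf_ennreal2[OF nnA smA] suminf_ennreal2[OF nnB smB] unfolding Sa_def Sb_def by simp
  then show ?thesis using suminf_nonneg[OF smA nnA] by (simp add: ennreal_less_iff)
qed

lemma F_strict_x:
  assumes p1: "critical_finite_var p1" and p2: "critical_finite_var p2"
    and le: "\<forall>t\<in>{0<..<1}. pgf p1 t \<le> pgf p2 t"
    and lt: "\<exists>t\<in>{0<..<1}. pgf p1 t < pgf p2 t"
  shows "\<exists>l u. 0 < l \<and> l < u \<and> (\<forall>x\<in>{l<..<u}. FF p1 (exp (-x)) < FF p2 (exp (-x)))"
proof -
  obtain a b where ab: "0 < a" "a < b" "b < 1" "\<forall>z\<in>{a<..<b}. FF p1 z < FF p2 z"
    using F_strict[OF p1 p2 le lt] by blast
  show ?thesis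
  proof (intro exI conjI ballI)
    show "0 < - ln b" using ab by simp
    show "- ln b < - ln a" using ab by simp
    fix x assume x: "x \<in> {- ln b<..<- ln a}"
    have "exp (-x) \<in> {a<..<b}"
    proof -
      have "exp (-x) < exp (ln b)" using x by simp
      moreover have "exp (ln a) < exp (-x)" using x by simp
      ultimately show ?thesis using ab by simp
    qed
    then show "FF p1 (exp (-x)) < FF p2 (exp (-x))" using ab by blast
  qed
qed

lemma exp_pow_div: "1 / exp (real n * x) = exp (-x) ^ n"
  by (simp add: exp_of_nat_mult[symmetric] exp_minus field_simps)

theorem part_a:
  assumes p1: "critical_finite_var p1" and p2: "critical_finite_var p2"
    and le: "\<forall>t\<in>{0<..<1}. pgf p1 t \<le> pgf p2 t"
    and lt: "\<exists>t\<in>{0<..<1}. pgf p1 t < pgf p2 t"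
    and \<alpha>: "\<alpha> < 0"
  shows "gw_mu p1 \<alpha> < gw_mu p2 \<alpha>"
proof -
  define \<beta> where "\<beta> = - \<alpha>"
  have \<beta>: "\<beta> > 0" using \<alpha> unfolding \<beta>_def by simp
  define K where "K x n = indicator {0..} x * x powr (\<beta> - 1) / exp (real n * x)" for x n
  define G where "G p x = indicator {0..} x * x powr (\<beta> - 1) * FF p (exp (-x))" for p x
  obtain l u where lu: "0 < l" "l < u" "\<forall>x\<in>{l<..<u}. FF p1 (exp (-x)) < FF p2 (exp (-x))"
    using F_strict_x[OF p1 p2 le lt] by blast
  have sG: "(\<lambda>n. PP p n * K x n) sums G p x" for p x
  proof (cases "x \<ge> 0")
    case True
    have "(\<lambda>n. (indicator {0..} x * x powr (\<beta> - 1)) * (PP p n * exp (-x) ^ n)) sums ((indicator {0..} x * x powr (\<beta> - 1)) * FF p (exp (-x)))"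
      by (rule sums_mult[OF F_sums]) (use True in simp)
    then show ?thesis unfolding K_def G_def
      by (simp add: exp_pow_div[symmetric] mult_ac)
  next
    case False
    then show ?thesis unfolding K_def G_def by simp
  qed
  have "(\<Sum>n. PP p1 n * real n powr \<alpha>) < (\<Sum>n. PP p2 n * real n powr \<alpha>)"
  proof (rule compare_general[where K = K and C = "Gamma \<beta>" and Ga = "G p1" and Gb = "G p2" and l = l and u = u])
    show "(\<lambda>x. K x n) \<in> borel_measurable borel" for n unfolding K_def by measurable
    show "0 \<le> K x n" for x n unfolding K_def by (simp add: indicator_def)
    show "(\<integral>\<^sup>+x. ennreal (K x n) \<partial>lborel) = ennreal (Gamma \<beta> * real n powr \<alpha>)" if "n \<ge> 1" for n
    proof -
      have n: "real n > 0" using that by simp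
      have "(\<integral>\<^sup>+x. ennreal (K x n) \<partial>lborel) = ennreal (Gamma \<beta> / real n powr \<beta>)"
        unfolding K_def using kernel[OF \<beta> n] by (simp add: mult.commute)
      also have "Gamma \<beta> / real n powr \<beta> = Gamma \<beta> * real n powr \<alpha>"
        unfolding \<beta>_def using n by (simp add: powr_minus divide_inverse)
      finally show ?thesis .
    qed
    show "Gamma \<beta> > 0" using \<beta> by (rule Gamma_real_pos)
    show "0 \<le> real n powr \<alpha>" for n by simp
    show "(\<lambda>n. PP p1 n * K x n) sums G p1 x" for x by (rule sG)
    show "(\<lambda>n. PP p2 n * K x n) sums G p2 x" for x by (rule sG)
    show "G p1 x \<le> G p2 x" for x
    proof (cases "x > 0")
      case True
      have "FF p1 (exp (-x)) \<le> FF p2 (exp (-x))" by (rule F_compare) (use True le in auto)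
      then show ?thesis unfolding G_def using True by (intro mult_left_mono) auto
    next
      case False
      then show ?thesis unfolding G_def by (cases "x = 0") auto
    qed
    show "l < u" by (rule lu)
    show "G p1 x < G p2 x" if "x \<in> {l<..<u}" for x
    proof -
      have x: "x > 0" using that lu by auto
      have "0 < indicator {0..} x * x powr (\<beta> - 1)" using x by simp
      then show ?thesis unfolding G_def using lu(3) that by (intro mult_strict_left_mono) auto
    qed
    show "(\<integral>\<^sup>+x. ennreal (G p2 x) \<partial>lborel) \<noteq> \<infinity>"
    proof -
      have "(\<integral>\<^sup>+x. ennreal (G p2 x) \<partial>lborel) \<le> (\<integral>\<^sup>+x. ennreal (indicator {0..} x * x powr (\<beta> - 1) / exp (1 * x)) \<partial>lborel)"
      proof (intro nn_integral_mono ennreal_leI)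
        fix x
        show "G p2 x \<le> indicator {0..} x * x powr (\<beta> - 1) / exp (1 * x)"
        proof (cases "x \<ge> 0")
          case True
          have "FF p2 (exp (-x)) \<le> exp (-x)" using F_bounds[of "exp (-x)" p2] True by simp
          then show ?thesis unfolding G_def using True
            by (simp add: exp_minus divide_inverse mult_left_mono)
        qed (simp add: G_def)
      qed
      also have "\<dots> = ennreal (Gamma \<beta> / 1 powr \<beta>)" by (rule kernel[OF \<beta>]) simp
      finally show ?thesis by (auto simp: top_unique)
    qed
  qed
  then show ?thesis unfolding gw_mu_def .
qed

lemma fin_bound:
  fixes G :: "real \<Rightarrow> real"
  assumes \<gamma>: "0 \<le> \<gamma>" "\<gamma> < 1/2" and e: "e < -1" and D: "D \<ge> 0"
    and small: "\<And>x. 0 < x \<Longrightarrow> x \<le> 1 \<Longrightarrow> G x \<le> D * x powr (-\<gamma> - 1/2)"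
    and large: "\<And>x. 1 < x \<Longrightarrow> G x \<le> x powr e"
    and neg: "\<And>x. x \<le> 0 \<Longrightarrow> G x \<le> 0"
  shows "(\<integral>\<^sup>+x. ennreal (G x) \<partial>lborel) \<noteq> \<infinity>"
proof -
  have i1: "(\<integral>\<^sup>+x. ennreal (D * x powr (-\<gamma> - 1/2)) * indicator {0..1} x \<partial>lborel) = ennreal (D * (1 powr (-\<gamma> - 1/2 + 1) / (-\<gamma> - 1/2 + 1)))"
    by (rule nn_integral_has_integral_lebesgue')
       (use D has_integral_mult_right[OF has_integral_powr_from_0[of "-\<gamma> - 1/2" 1], of D] \<gamma> in auto)
  have i2: "(\<integral>\<^sup>+x. ennreal (x powr e) * indicator {1..} x \<partial>lborel) = ennreal (-(1 powr (e+1)) / (e+1))"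
    by (rule nn_integral_has_integral_lebesgue') (use has_integral_powr_to_inf[OF e, of 1] in auto)
  have "(\<integral>\<^sup>+x. ennreal (G x) \<partial>lborel) \<le> (\<integral>\<^sup>+x. ennreal (D * x powr (-\<gamma> - 1/2)) * indicator {0..1} x + ennreal (x powr e) * indicator {1..} x \<partial>lborel)"
  proof (rule nn_integral_mono)
    fix x :: real
    consider "x \<le> 0" | "0 < x \<and> x \<le> 1" | "1 < x" by linarith
    then show "ennreal (G x) \<le> ennreal (D * x powr (-\<gamma> - 1/2)) * indicator {0..1} x + ennreal (x powr e) * indicator {1..} x"
    proof cases
      case 1 then show ?thesis using neg[of x] by (simp add: ennreal_neg)
    next
      case 2
      then have "ennreal (G x) \<le> ennreal (D * x powr (-\<gamma> - 1/2)) * indicator {0..1} x"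
        using small[of x] by (auto intro!: ennreal_leI)
      then show ?thesis by (rule order_trans) simp
    next
      case 3
      then have "ennreal (G x) \<le> ennreal (x powr e) * indicator {1..} x"
        using large[of x] by (auto intro!: ennreal_leI)
      then show ?thesis by (rule order_trans) simp
    qed
  qed
  also have "\<dots> = (\<integral>\<^sup>+x. ennreal (D * x powr (-\<gamma> - 1/2)) * indicator {0..1} x \<partial>lborel) + (\<integral>\<^sup>+x. ennreal (x powr e) * indicator {1..} x \<partial>lborel)"
    by (rule nn_integral_add) auto
  also have "\<dots> < \<infinity>" unfolding i1 i2 by simp
  finally show ?thesis by simp
qed

lemma sqrt_bound:
  assumes p: "critical_finite_var p" and x: "x > 0"
  shows "1 - FF p (exp (-x)) \<le> sqrt x / sqrt (cc p)"
proof -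
  have z: "0 < exp (-x)" "exp (-x) < 1" using x by auto
  have c: "cc p > 0" by (rule cc_pos[OF p])
  have "cc p * (1 - FF p (exp (-x)))^2 \<le> 1 - exp (-x)" by (rule F_sqrt_bound[OF p z])
  also have "\<dots> \<le> x" using exp_ge_add_one_self[of "-x"] by simp
  finally have "(1 - FF p (exp (-x)))^2 \<le> x / cc p" using c by (simp add: field_simps)
  then have "sqrt ((1 - FF p (exp (-x)))^2) \<le> sqrt (x / cc p)" by (rule real_sqrt_le_mono)
  moreover have "0 \<le> 1 - FF p (exp (-x))"
  proof -
    have "FF p (exp (-x)) \<le> exp (-x)" using F_bounds(2)[of "exp (-x)" p] z by simp
    then show ?thesis using z by linarith
  qed
  ultimately show ?thesis by (simp add: real_sqrt_divide)
qed

lemma powr_sqrt_combine: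
  assumes x: "x > 0"
  shows "x powr (-\<gamma>) * (sqrt x / S) / x = (1 / S) * x powr (-\<gamma> - 1/2)"
proof -
  have "sqrt x = x powr (1/2)" using x by (simp add: powr_half_sqrt)
  have "x powr (-\<gamma>) * x powr (1/2) = x powr (-\<gamma> + 1/2)" by (rule powr_add[symmetric])
  moreover have "x powr (-\<gamma> + 1/2) / x = x powr (-\<gamma> + 1/2 - 1)"
  proof -
    have "x powr (-\<gamma> + 1/2) / x powr 1 = x powr (-\<gamma> + 1/2 - 1)" by (rule powr_diff[symmetric])
    then show ?thesis using x by simp
  qed
  ultimately have "x powr (-\<gamma>) * sqrt x / x = x powr (-\<gamma> + 1/2 - 1)"
    using \<open>sqrt x = x powr (1/2)\<close> by simp
  moreover have "-\<gamma> + 1/2 - 1 = -\<gamma> - 1/2" by simp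
  ultimately have h: "x powr (-\<gamma>) * sqrt x / x = x powr (-\<gamma> - 1/2)" by metis
  have "x powr (-\<gamma>) * (sqrt x / S) / x = (x powr (-\<gamma>) * sqrt x / x) / S" by simp
  then show ?thesis unfolding h by simp
qed

lemma G_diff_sums:
  assumes "x > 0" "critical_finite_var p"
  shows "(\<lambda>n. PP p n * (c - exp (-x) ^ n)) sums (c - FF p (exp (-x)))"
proof -
  have "(\<lambda>n. c * PP p n - PP p n * exp (-x) ^ n) sums (c * 1 - FF p (exp (-x)))"
    by (intro sums_diff sums_mult P_sums_1[OF assms(2)] F_sums) (use assms in simp)
  then show ?thesis by (simp add: algebra_simps)
qed

theorem part_b:
  assumes p1: "critical_finite_var p1" and p2: "critical_finite_var p2"
    and le: "\<forall>t\<in>{0<..<1}. pgf p1 t \<le> pgf p2 t"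
    and lt: "\<exists>t\<in>{0<..<1}. pgf p1 t < pgf p2 t"
    and \<alpha>: "0 < \<alpha>" "\<alpha> < 1/2"
  shows "gw_mu p1 \<alpha> > gw_mu p2 \<alpha>"
proof -
  define s where "s = 1 - \<alpha>"
  have s: "s > 0" using \<alpha> unfolding s_def by simp
  define K where "K x n = indicator {0<..} x * x powr (s - 1) * ((exp (-(0*x)) - exp (-(real n * x))) / x)" for x n
  define G where "G p x = indicator {0<..} x * x powr (s - 1) * ((1 - FF p (exp (-x))) / x)" for p x
  obtain l u where lu: "0 < l" "l < u" "\<forall>x\<in>{l<..<u}. FF p1 (exp (-x)) < FF p2 (exp (-x))"
    using F_strict_x[OF p1 p2 le lt] by blast
  have sG: "(\<lambda>n. PP p n * K x n) sums G p x" if p: "critical_finite_var p" for p x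
  proof (cases "x > 0")
    case True
    have "(\<lambda>n. (x powr (s - 1) / x) * (PP p n * (1 - exp (-x) ^ n))) sums ((x powr (s - 1) / x) * (1 - FF p (exp (-x))))"
      by (rule sums_mult[OF G_diff_sums[OF True p]])
    moreover have "exp (- (real n * x)) = exp (-x) ^ n" for n
      using exp_pow_div[of n x] by (simp add: exp_minus divide_inverse)
    ultimately show ?thesis unfolding K_def G_def using True by (simp add: mult_ac)
  next
    case False
    then show ?thesis unfolding K_def G_def by simp
  qed
  have "(\<Sum>n. PP p2 n * real n powr \<alpha>) < (\<Sum>n. PP p1 n * real n powr \<alpha>)"
  proof (rule compare_general[where K = K and C = "Gamma s / \<alpha>" and Ga = "G p2" and Gb = "G p1" and l = l and u = u])
    show "(\<lambda>x. K x n) \<in> borel_measurable borel" for n unfolding K_def by measurable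
    show "0 \<le> K x n" if "n \<ge> 1" for x n unfolding K_def by (auto simp: indicator_def)
    show "(\<integral>\<^sup>+x. ennreal (K x n) \<partial>lborel) = ennreal (Gamma s / \<alpha> * real n powr \<alpha>)" if "n \<ge> 1" for n
    proof -
      have "(\<integral>\<^sup>+x. ennreal (K x n) \<partial>lborel) = (\<integral>\<^sup>+t. ennreal (indicator {0<..real n} t * (Gamma s / t powr s)) \<partial>lborel)"
        unfolding K_def by (rule tonelli_L[OF s]) simp_all
      also have "\<dots> = (\<integral>\<^sup>+t. ennreal (Gamma s * t powr (\<alpha> - 1)) * indicator {0..real n} t \<partial>lborel)"
      proof (rule nn_integral_cong_AE)
        show "AE t in lborel. ennreal (indicator {0<..real n} t * (Gamma s / t powr s)) = ennreal (Gamma s * t powr (\<alpha> - 1)) * indicator {0..real n} t"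
          using AE_lborel_singleton[of 0]
        proof eventually_elim
          fix t :: real assume t: "t \<noteq> 0"
          show "ennreal (indicator {0<..real n} t * (Gamma s / t powr s)) = ennreal (Gamma s * t powr (\<alpha> - 1)) * indicator {0..real n} t"
          proof (cases "t \<in> {0<..real n}")
            case True
            then have "t > 0" by simp
            then have "Gamma s / t powr s = Gamma s * t powr (\<alpha> - 1)"
              unfolding s_def by (simp add: powr_minus[symmetric] divide_inverse powr_diff)
            then show ?thesis using True by simp
          next
            case False
            then show ?thesis using t by (auto simp: indicator_def)
          qed
        qed
      qed
      also have "\<dots> = ennreal (Gamma s * (real n powr (\<alpha> - 1 + 1) / (\<alpha> - 1 + 1)))"
        by (rule nn_integral_has_integral_lebesgue')
           (use s \<alpha> has_integral_mult_right[OF has_integral_powr_from_0[of "\<alpha> - 1" "real n"], of "Gamma s"] in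
            \<open>auto intro!: mult_nonneg_nonneg less_imp_le[OF Gamma_real_pos]\<close>)
      also have "Gamma s * (real n powr (\<alpha> - 1 + 1) / (\<alpha> - 1 + 1)) = Gamma s / \<alpha> * real n powr \<alpha>" by simp
      finally show ?thesis .
    qed
    show "Gamma s / \<alpha> > 0" using Gamma_real_pos[OF s] \<alpha> by simp
    show "0 \<le> real n powr \<alpha>" for n by simp
    show "(\<lambda>n. PP p2 n * K x n) sums G p2 x" for x by (rule sG[OF p2])
    show "(\<lambda>n. PP p1 n * K x n) sums G p1 x" for x by (rule sG[OF p1])
    show "G p2 x \<le> G p1 x" for x
    proof (cases "x > 0")
      case True
      have "FF p1 (exp (-x)) \<le> FF p2 (exp (-x))" by (rule F_compare) (use True le in auto)
      then show ?thesis unfolding G_def using True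
        by (intro mult_left_mono divide_right_mono) auto
    next
      case False
      then show ?thesis unfolding G_def by simp
    qed
    show "l < u" by (rule lu)
    show "G p2 x < G p1 x" if "x \<in> {l<..<u}" for x
    proof -
      have x: "x > 0" using that lu by auto
      have "(1 - FF p2 (exp (-x))) / x < (1 - FF p1 (exp (-x))) / x"
        using lu(3) that x by (intro divide_strict_right_mono) auto
      moreover have "0 < indicator {0<..} x * x powr (s - 1)" using x by simp
      ultimately show ?thesis unfolding G_def by (intro mult_strict_left_mono) auto
    qed
    show "(\<integral>\<^sup>+x. ennreal (G p1 x) \<partial>lborel) \<noteq> \<infinity>"
    proof (rule fin_bound[where \<gamma> = \<alpha> and e = "-\<alpha> - 1" and D = "1 / sqrt (cc p1)"])
      show "0 \<le> \<alpha>" "\<alpha> < 1/2" "-\<alpha> - 1 < -1" using \<alpha> by auto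
      show "0 \<le> 1 / sqrt (cc p1)" using cc_pos[OF p1] by simp
      show "G p1 x \<le> 1 / sqrt (cc p1) * x powr (- \<alpha> - 1 / 2)" if x: "0 < x" "x \<le> 1" for x
      proof -
        have "G p1 x = x powr (-\<alpha>) * ((1 - FF p1 (exp (-x))) / x)" using x unfolding G_def s_def by simp
        also have "\<dots> \<le> x powr (-\<alpha>) * ((sqrt x / sqrt (cc p1)) / x)"
          using sqrt_bound[OF p1 x(1)] x by (intro mult_left_mono divide_right_mono) auto
        also have "\<dots> = 1 / sqrt (cc p1) * x powr (- \<alpha> - 1 / 2)"
          using powr_sqrt_combine[OF x(1), of \<alpha> "sqrt (cc p1)"] by simp
        finally show ?thesis .
      qed
      show "G p1 x \<le> x powr (- \<alpha> - 1)" if x: "1 < x" for x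
      proof -
        have x0: "x > 0" using x by simp
        have F0: "0 \<le> FF p1 (exp (-x))" using F_bounds(1)[of "exp (-x)" p1] x by simp
        have "G p1 x = x powr (-\<alpha>) * ((1 - FF p1 (exp (-x))) / x)" using x unfolding G_def s_def by simp
        also have "\<dots> \<le> x powr (-\<alpha>) * (1 / x)"
          using F0 x0 by (intro mult_left_mono divide_right_mono) auto
        also have "\<dots> = x powr (-\<alpha> - 1)"
        proof -
          have "x powr (-\<alpha>) / x powr 1 = x powr (-\<alpha> - 1)" by (rule powr_diff[symmetric])
          then show ?thesis using x0 by simp
        qed
        finally show ?thesis .
      qed
      show "G p1 x \<le> 0" if "x \<le> 0" for x using that unfolding G_def by simp
    qed
  qed
  then show ?thesis unfolding gw_mu_def by simp
qed

lemma ln_integral: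
  assumes n: "real n \<ge> 1"
  shows "(\<integral>\<^sup>+t. ennreal (indicator {1<..real n} t * (Gamma 1 / t powr 1)) \<partial>lborel) = ennreal (ln (real n))"
proof -
  have "((\<lambda>t. 1 / t) has_integral (ln (real n) - ln 1)) {1..real n}"
  proof (rule fundamental_theorem_of_calculus[OF n])
    fix t assume t: "t \<in> {1..real n}"
    then have "(ln has_real_derivative 1 / t) (at t within {1..real n})"
      by (auto intro!: derivative_eq_intros)
    then show "(ln has_vector_derivative 1 / t) (at t within {1..real n})"
      by (simp add: has_real_derivative_iff_has_vector_derivative)
  qed
  then have "(\<integral>\<^sup>+t. ennreal (1 / t) * indicator {1..real n} t \<partial>lborel) = ennreal (ln (real n))"
    by (subst nn_integral_has_integral_lebesgue') auto
  moreover have "(\<integral>\<^sup>+t. ennreal (indicator {1<..real n} t * (Gamma 1 / t powr 1)) \<partial>lborel) = (\<integral>\<^sup>+t. ennreal (1 / t) * indicator {1..real n} t \<partial>lborel)"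
    by (rule nn_integral_cong_AE, use AE_lborel_singleton[of 1] in eventually_elim) (auto simp: indicator_def)
  ultimately show ?thesis by simp
qed

theorem part_c:
  assumes p1: "critical_finite_var p1" and p2: "critical_finite_var p2"
    and le: "\<forall>t\<in>{0<..<1}. pgf p1 t \<le> pgf p2 t"
    and lt: "\<exists>t\<in>{0<..<1}. pgf p1 t < pgf p2 t"
  shows "gw_mu' p1 > gw_mu' p2"
proof -
  define K where "K x n = indicator {0<..} x * x powr (1 - 1) * ((exp (-(1*x)) - exp (-(real n * x))) / x)" for x :: real and n :: nat
  define G where "G p x = indicator {0<..} x * ((exp (-x) - FF p (exp (-x))) / x)" for p x
  obtain l u where lu: "0 < l" "l < u" "\<forall>x\<in>{l<..<u}. FF p1 (exp (-x)) < FF p2 (exp (-x))"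
    using F_strict_x[OF p1 p2 le lt] by blast
  have sG: "(\<lambda>n. PP p n * K x n) sums G p x" if p: "critical_finite_var p" for p x
  proof (cases "x > 0")
    case True
    have "(\<lambda>n. (1 / x) * (PP p n * (exp (-x) - exp (-x) ^ n))) sums ((1 / x) * (exp (-x) - FF p (exp (-x))))"
      by (rule sums_mult[OF G_diff_sums[OF True p]])
    moreover have "exp (- (real n * x)) = exp (-x) ^ n" for n
      using exp_pow_div[of n x] by (simp add: exp_minus divide_inverse)
    ultimately show ?thesis unfolding K_def G_def using True by (simp add: mult_ac)
  next
    case False
    then show ?thesis unfolding K_def G_def by simp
  qed
  have "(\<Sum>n. PP p2 n * ln (real n)) < (\<Sum>n. PP p1 n * ln (real n))"
  proof (rule compare_general[where K = K and C = 1 and Ga = "G p2" and Gb = "G p1" and l = l and u = u])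
    show "(\<lambda>x. K x n) \<in> borel_measurable borel" for n unfolding K_def by measurable
    show "0 \<le> K x n" if "n \<ge> 1" for x n
    proof (cases "x > 0")
      case True
      have "real n * x \<ge> 1 * x" using that True by (intro mult_right_mono) auto
      then have "exp (-(real n * x)) \<le> exp (-(1*x))" by simp
      then show ?thesis unfolding K_def using True by simp
    qed (simp add: K_def)
    show "(\<integral>\<^sup>+x. ennreal (K x n) \<partial>lborel) = ennreal (1 * ln (real n))" if "n \<ge> 1" for n
    proof -
      have "(\<integral>\<^sup>+x. ennreal (K x n) \<partial>lborel) = (\<integral>\<^sup>+t. ennreal (indicator {1<..real n} t * (Gamma 1 / t powr 1)) \<partial>lborel)"
        unfolding K_def by (rule tonelli_L) (use that in simp_all)
      also have "\<dots> = ennreal (ln (real n))" by (rule ln_integral) (use that in simp)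
      finally show ?thesis by simp
    qed
    show "(1::real) > 0" by simp
    show "0 \<le> ln (real n)" for n by (cases "n = 0") auto
    show "(\<lambda>n. PP p2 n * K x n) sums G p2 x" for x by (rule sG[OF p2])
    show "(\<lambda>n. PP p1 n * K x n) sums G p1 x" for x by (rule sG[OF p1])
    show "G p2 x \<le> G p1 x" for x
    proof (cases "x > 0")
      case True
      have "FF p1 (exp (-x)) \<le> FF p2 (exp (-x))" by (rule F_compare) (use True le in auto)
      then show ?thesis unfolding G_def using True
        by (intro mult_left_mono divide_right_mono) auto
    next
      case False
      then show ?thesis unfolding G_def by simp
    qed
    show "l < u" by (rule lu)
    show "G p2 x < G p1 x" if "x \<in> {l<..<u}" for x
    proof -
      have x: "x > 0" using that lu by auto
      have "(exp (-x) - FF p2 (exp (-x))) / x < (exp (-x) - FF p1 (exp (-x))) / x"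
        using lu(3) that x by (intro divide_strict_right_mono) auto
      then show ?thesis unfolding G_def using x by simp
    qed
    show "(\<integral>\<^sup>+x. ennreal (G p1 x) \<partial>lborel) \<noteq> \<infinity>"
    proof (rule fin_bound[where \<gamma> = 0 and e = "-2" and D = "1 / sqrt (cc p1)"])
      show "0 \<le> (0::real)" "(0::real) < 1/2" "-2 < (-1::real)" by auto
      show "0 \<le> 1 / sqrt (cc p1)" using cc_pos[OF p1] by simp
      show "G p1 x \<le> 1 / sqrt (cc p1) * x powr (- 0 - 1 / 2)" if x: "0 < x" "x \<le> 1" for x
      proof -
        have "G p1 x = x powr (-0) * ((exp (-x) - FF p1 (exp (-x))) / x)" using x unfolding G_def by simp
        also have "\<dots> \<le> x powr (-0) * ((sqrt x / sqrt (cc p1)) / x)"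
        proof (intro mult_left_mono divide_right_mono)
          have "exp (-x) \<le> 1" using x by simp
          then show "exp (-x) - FF p1 (exp (-x)) \<le> sqrt x / sqrt (cc p1)"
            using sqrt_bound[OF p1 x(1)] by linarith
        qed (use x in auto)
        also have "\<dots> = 1 / sqrt (cc p1) * x powr (- 0 - 1 / 2)"
          using powr_sqrt_combine[OF x(1), of 0 "sqrt (cc p1)"] by simp
        finally show ?thesis .
      qed
      show "G p1 x \<le> x powr (- 2)" if x: "1 < x" for x
      proof -
        have x0: "x > 0" using x by simp
        have F0: "0 \<le> FF p1 (exp (-x))" using F_bounds(1)[of "exp (-x)" p1] x by simp
        have ex: "exp (-x) \<le> 1 / x"
        proof -
          have "x \<le> exp x" using exp_ge_add_one_self[of x] by linarith
          then show ?thesis using x0 by (simp add: exp_minus field_simps)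
        qed
        have "G p1 x = (exp (-x) - FF p1 (exp (-x))) / x" using x unfolding G_def by simp
        also have "\<dots> \<le> (1 / x) / x"
          using F0 x0 ex by (intro divide_right_mono) auto
        also have "\<dots> = x powr (- 2)"
          using x0 by (simp add: powr_minus powr_realpow power2_eq_square divide_inverse)
        finally show ?thesis .
      qed
      show "G p1 x \<le> 0" if "x \<le> 0" for x using that unfolding G_def by simp
    qed
  qed
  then show ?thesis unfolding gw_mu'_def by simp
qed

theorem theorem6p8:
  fixes \<xi>1 \<xi>2 :: "nat pmf"
  assumes "critical_finite_var \<xi>1" and "critical_finite_var \<xi>2"
    and "\<forall>t\<in>{0<..<1}. pgf \<xi>1 t \<le> pgf \<xi>2 t"
    and "\<exists>t\<in>{0<..<1}. pgf \<xi>1 t < pgf \<xi>2 t"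
  shows "(\<forall>\<alpha>::real. \<alpha> < 0 \<longrightarrow> gw_mu \<xi>1 \<alpha> < gw_mu \<xi>2 \<alpha>)
       \<and> (\<forall>\<alpha>::real. 0 < \<alpha> \<and> \<alpha> < 1/2 \<longrightarrow> gw_mu \<xi>1 \<alpha> > gw_mu \<xi>2 \<alpha>)
       \<and> gw_mu' \<xi>1 > gw_mu' \<xi>2"
  using part_a[OF assms] part_b[OF assms] part_c[OF assms] by blast

end
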